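(* Assume the rationality condition and $c^{(2)}\mathbb E A-\mathbb E B^{(2)}>0$. Then for each $s_1$ with $\mathrm{Re}\,s_1\ge0$, the polynomials $z\mapsto g(s_1,z)-f(s_1,z)$ and $z\mapsto g(s_1,z)$ have the same number of zeroes (counted with multiplicity) in $\mathrm{Re}\,z\ge0$.
   Context: Let $(A,B^{(1)},B^{(2)})$ be a random triple with nonnegative components, $A>0$ a.s., and $c^{(1)},c^{(2)}>0$. Assume $B^{(1)}/c^{(1)}\ge B^{(2)}/c^{(2)}$ a.s., and set $D:=B^{(1)}/c^{(1)}-B^{(2)}/c^{(2)}\ge0$, $X^{(2)}:=A-B^{(2)}/c^{(2)}$. Rationality: $H(q_0,q_1,q_2)=\mathbb E e^{-q_0A-q_1B^{(1)}-q_2B^{(2)}}$ is a rational function, so that $\mathbb E e^{-s_1D+zX^{(2)}}=f(s_1,z)/g(s_1,z)$ with $f,g$ polynomials and, for each fixed $s_1$, $\deg_z f(s_1,\cdot)<\deg_z g(s_1,\cdot)$. *)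

theory Defs
  imports "HOL-Probability.Probability" "HOL-Computational_Algebra.Polynomial"
begin

text \<open>Bivariate polynomials in (s, z) are represented as polynomials in z whose
  coefficients are polynomials in s.  \<open>sect2 F s\<close> is the one-variable
  polynomial z \<mapsto> F(s,z).\<close>
definition sect2 :: "complex poly poly \<Rightarrow> complex \<Rightarrow> complex poly" where
  "sect2 F s = map_poly (\<lambda>c. poly c s) F"

definition eval2 :: "complex poly poly \<Rightarrow> complex \<Rightarrow> complex \<Rightarrow> complex" where
  "eval2 F s z = poly (sect2 F s) z"

text \<open>Trivariate polynomials in (q0,q1,q2): nested polynomials, innermost variable q0.\<close>
definition eval3 :: "complex poly poly poly \<Rightarrow> complex \<Rightarrow> complex \<Rightarrow> complex \<Rightarrow> complex" where
  "eval3 P q0 q1 q2 = poly (map_poly (\<lambda>c. poly (map_poly (\<lambda>d. poly d q0) c) q1) P) q2"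

definition zeros_rhp :: "complex poly \<Rightarrow> nat" where
  "zeros_rhp p = (\<Sum>z\<in>{z. poly p z = 0 \<and> Re z \<ge> 0}. order z p)"

end

theory Submission
  imports Defs "HOL-Complex_Analysis.Complex_Analysis" "HOL-Computational_Algebra.Polynomial_Factorial" "HOL-Computational_Algebra.Field_as_Ring"
begin


lemma zorder_poly:
  fixes p :: "complex poly"
  assumes "p \<noteq> 0"
  shows "zorder (poly p) a = int (order a p)"
proof -
  obtain r where r: "p = [:- a, 1:] ^ order a p * r" "\<not> [:- a, 1:] dvd r"
    using order_decomp[OF assms] by blast
  have "poly r a \<noteq> 0" using r(2) by (simp add: poly_eq_0_iff_dvd)
  show ?thesis
  proof (rule zorder_eqI[of UNIV a "poly r"])
    fix w :: complex
    show "poly p w = poly r w * (w - a) powi int (order a p)"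
      by (subst r(1)) (simp add: poly_power mult.commute)
  qed (use \<open>poly r a \<noteq> 0\<close> in \<open>auto intro!: holomorphic_intros\<close>)
qed

lemma poly_dominate_far:
  fixes p q :: "complex poly"
  assumes "degree q < degree p"
  shows "\<exists>R. \<forall>z. R \<le> norm z \<longrightarrow> cmod (poly q z) < cmod (poly p z)"
proof -
  have "((\<lambda>x. poly q x / poly p x) \<longlongrightarrow> 0) at_infinity"
    by (rule poly_divide_tendsto_0_at_infinity[OF assms])
  hence e1: "eventually (\<lambda>x. norm (poly q x / poly p x) < 1) at_infinity"
    by (rule order_tendstoD(2)[OF tendsto_norm_zero, simplified]) simp
  have "filterlim (poly p) at_infinity at_infinity"
    using assms by (intro filterlim_poly_at_infinity) simp
  hence e2: "eventually (\<lambda>x. norm (poly p x) \<ge> 1) at_infinity"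
    by (simp add: filterlim_at_infinity_conv_norm_at_top filterlim_at_top)
  have "eventually (\<lambda>x. cmod (poly q x) < cmod (poly p x)) at_infinity"
    using e1 e2
  proof eventually_elim
    case (elim x)
    hence "poly p x \<noteq> 0" by auto
    thus ?case using elim(1) by (simp add: norm_divide divide_less_eq)
  qed
  thus ?thesis by (simp add: eventually_at_infinity)
qed

lemma sum_wind:
  fixes r :: "complex poly" and d T :: real
  assumes r0: "r \<noteq> 0" and d: "d > 0"
    and inT: "\<And>z. poly r z = 0 \<Longrightarrow> norm z < T"
    and lhp: "\<And>z. poly r z = 0 \<Longrightarrow> Re z < 0 \<Longrightarrow> Re z < - d"
  shows "(\<Sum>z\<in>{z. poly r z = 0}. winding_number (rectpath (Complex (-d) (-T)) (Complex T T)) z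
            * of_int (zorder (poly r) z)) = of_nat (zeros_rhp r)"
proof -
  define S where "S = {z. poly r z = 0}"
  define Sp where "Sp = {z. poly r z = 0 \<and> 0 \<le> Re z}"
  have fin: "finite S" unfolding S_def using r0 by (rule poly_roots_finite)
  have sub: "Sp \<subseteq> S" unfolding S_def Sp_def by auto
  let ?w = "winding_number (rectpath (Complex (-d) (-T)) (Complex T T))"
  have "(\<Sum>z\<in>S. ?w z * of_int (zorder (poly r) z)) = (\<Sum>z\<in>Sp. ?w z * of_int (zorder (poly r) z))"
  proof (rule sum.mono_neutral_right[OF fin sub])
    show "\<forall>z\<in>S - Sp. ?w z * of_int (zorder (poly r) z) = 0"
    proof
      fix z assume z: "z \<in> S - Sp"
      hence "poly r z = 0" "Re z < 0" unfolding S_def Sp_def by auto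
      hence "Re z < -d" by (rule lhp)
      hence "z \<notin> cbox (Complex (-d) (-T)) (Complex T T)" by (auto simp: in_cbox_complex_iff)
      moreover have "0 \<le> T" using inT[OF \<open>poly r z = 0\<close>] norm_ge_zero[of z] by linarith
      ultimately have "?w z = 0" using d
        by (intro winding_number_rectpath_outside) auto
      thus "?w z * of_int (zorder (poly r) z) = 0" by simp
    qed
  qed
  also have "\<dots> = (\<Sum>z\<in>Sp. of_nat (order z r))"
  proof (rule sum.cong[OF refl])
    fix z assume z: "z \<in> Sp"
    hence z0: "poly r z = 0" "0 \<le> Re z" unfolding Sp_def by auto
    have nT: "norm z < T" by (rule inT[OF z0(1)])
    have "\<bar>Im z\<bar> < T" using abs_Im_le_cmod[of z] nT by linarith
    moreover have "Re z < T" using abs_Re_le_cmod[of z] nT by linarith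
    ultimately have "z \<in> box (Complex (-d) (-T)) (Complex T T)" using z0(2) d
      by (auto simp: in_box_complex_iff)
    hence "?w z = 1" by (rule winding_number_rectpath)
    thus "?w z * of_int (zorder (poly r) z) = of_nat (order z r)"
      by (simp add: zorder_poly[OF r0])
  qed
  also have "\<dots> = of_nat (zeros_rhp r)" unfolding zeros_rhp_def Sp_def by simp
  finally show ?thesis unfolding S_def .
qed

lemma rouche_core:
  fixes p q h p1 q1 :: "complex poly"
  assumes pq: "p = h * p1" "q = h * q1" and deg: "degree q < degree p"
    and left: "\<And>T. \<exists>\<delta>>0. \<forall>d. 0 < d \<and> d \<le> \<delta> \<longrightarrow> (\<forall>y. \<bar>y\<bar> \<le> T \<longrightarrow>
        cmod (poly q1 (Complex (-d) y)) < cmod (poly p1 (Complex (-d) y)))"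
  shows "zeros_rhp (p - q) = zeros_rhp p"
proof -
  have p0: "p \<noteq> 0" using deg by auto
  hence h0: "h \<noteq> 0" using pq by auto
  have pq0: "p - q \<noteq> 0" using deg by auto
  define Z where "Z = {z. poly p z = 0} \<union> {z. poly (p - q) z = 0}"
  have finZ: "finite Z" unfolding Z_def using poly_roots_finite[OF p0] poly_roots_finite[OF pq0] by simp
  obtain R0 where R0: "\<And>z. R0 \<le> norm z \<Longrightarrow> cmod (poly q z) < cmod (poly p z)"
    using poly_dominate_far[OF deg] by blast
  define T where "T = max (max R0 0) (Max (insert 0 (norm ` Z))) + 1"
  have TZ: "norm z < T" if "z \<in> Z" for z
  proof -
    have "norm z \<le> Max (insert 0 (norm ` Z))" using finZ that by (intro Max_ge) auto
    thus ?thesis unfolding T_def by linarith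
  qed
  have TR: "R0 < T" "0 < T" unfolding T_def by linarith+
  obtain \<delta> where \<delta>: "\<delta> > 0" and \<delta>': "\<And>d y. 0 < d \<Longrightarrow> d \<le> \<delta> \<Longrightarrow> \<bar>y\<bar> \<le> T \<Longrightarrow>
        cmod (poly q1 (Complex (-d) y)) < cmod (poly p1 (Complex (-d) y))"
    using left[of T] by blast
  define L where "L = (\<lambda>z. - Re z) ` {z\<in>Z. Re z < 0}"
  define m where "m = Min (insert \<delta> L)"
  have finL: "finite L" unfolding L_def using finZ by simp
  have m0: "m > 0" unfolding m_def using finL \<delta> by (auto simp: L_def)
  have md: "m \<le> \<delta>" unfolding m_def using finL by simp
  have mL: "m \<le> - Re z" if "z \<in> Z" "Re z < 0" for z
    unfolding m_def using finL that by (intro Min_le) (auto simp: L_def)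
  define B where "B = (\<lambda>z. - Re z) ` {z. poly h z = 0}"
  have finB: "finite B" unfolding B_def using poly_roots_finite[OF h0] by simp
  have "infinite ({0<..<m} - B)" using finB m0 by (intro Diff_infinite_finite) auto
  hence "{0<..<m} - B \<noteq> {}" by (rule infinite_imp_nonempty)
  then obtain d where d: "d \<in> {0<..<m}" "d \<notin> B" by blast
  have d0: "0 < d" "d \<le> \<delta>" using d md by auto
  have dL: "Re z < - d" if "z \<in> Z" "Re z < 0" for z using mL[OF that] d by auto
  have hd: "poly h z \<noteq> 0" if "Re z = - d" for z
  proof
    assume "poly h z = 0"
    hence "d \<in> B" unfolding B_def using that by force
    with d show False by simp
  qed
  define a1 where "a1 = Complex (-d) (-T)"
  define a3 where "a3 = Complex T T"
  define \<gamma> where "\<gamma> = rectpath a1 a3"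
  have less: "Re a1 \<le> Re a3" "Im a1 \<le> Im a3" unfolding a1_def a3_def using d0 TR by auto
  have onpath: "cmod (poly q z) < cmod (poly p z)" if "z \<in> path_image \<gamma>" for z
  proof -
    from that have zc: "z \<in> cbox a1 a3 - box a1 a3" unfolding \<gamma>_def
      using path_image_rectpath_cbox_minus_box[OF less] by simp
    hence zz: "-d \<le> Re z" "Re z \<le> T" "-T \<le> Im z" "Im z \<le> T"
      "Re z = -d \<or> Re z = T \<or> Im z = -T \<or> Im z = T"
      unfolding a1_def a3_def by (auto simp: in_cbox_complex_iff in_box_complex_iff)
    show ?thesis
    proof (cases "Re z = -d")
      case True
      have "z = Complex (-d) (Im z)" using True by (simp add: complex_eq_iff)
      hence "cmod (poly q1 z) < cmod (poly p1 z)" using \<delta>'[OF d0, of "Im z"] zz by auto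
      moreover have "poly h z \<noteq> 0" by (rule hd[OF True])
      ultimately show ?thesis using pq by (simp add: norm_mult)
    next
      case False
      hence "T \<le> norm z" using zz abs_Re_le_cmod[of z] abs_Im_le_cmod[of z] by auto
      thus ?thesis using R0 TR by auto
    qed
  qed
  have R: "(\<Sum>w\<in>{pa \<in> UNIV. poly p pa + - poly q pa = 0}. winding_number \<gamma> w * of_int (zorder (\<lambda>pa. poly p pa + - poly q pa) w))
     = (\<Sum>pa\<in>{pa \<in> UNIV. poly p pa = 0}. winding_number \<gamma> pa * of_int (zorder (poly p) pa))"
  proof (rule Rouche_theorem[of UNIV "poly p" "\<lambda>z. - poly q z" \<gamma>])
    show "finite {pa \<in> UNIV. poly p pa + - poly q pa = 0}"
      using poly_roots_finite[OF pq0] by simp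
    show "finite {pa \<in> UNIV. poly p pa = 0}" using poly_roots_finite[OF p0] by simp
    show "\<forall>z\<in>path_image \<gamma>. cmod (- poly q z) < cmod (poly p z)" using onpath by simp
  qed (auto simp: \<gamma>_def intro!: holomorphic_intros)
  have e1: "(\<lambda>pa. poly p pa + - poly q pa) = poly (p - q)" by auto
  have w1: "(\<Sum>z\<in>{z. poly (p-q) z = 0}. winding_number \<gamma> z * of_int (zorder (poly (p-q)) z)) = of_nat (zeros_rhp (p-q))"
    unfolding \<gamma>_def a1_def a3_def
    by (rule sum_wind[OF pq0 d0(1)]) (auto simp: Z_def intro: TZ dL)
  have w2: "(\<Sum>z\<in>{z. poly p z = 0}. winding_number \<gamma> z * of_int (zorder (poly p) z)) = of_nat (zeros_rhp p)"
    unfolding \<gamma>_def a1_def a3_def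
    by (rule sum_wind[OF p0 d0(1)]) (auto simp: Z_def intro: TZ dL)
  have "(of_nat (zeros_rhp (p-q)) :: complex) = of_nat (zeros_rhp p)"
    using R w1 w2 unfolding e1 by simp
  thus ?thesis by simp
qed



lemma deriv_normsq_line:
  fixes R :: "complex \<Rightarrow> complex"
  assumes "(R has_field_derivative D) (at (Complex t y))"
  shows "((\<lambda>s. (cmod (R (Complex s y)))^2) has_real_derivative 2 * Re (cnj (R (Complex t y)) * D)) (at t)"
proof -
  define F where "F = (\<lambda>s::real. R (Complex s y))"
  have l: "((\<lambda>s::real. Complex s y) has_vector_derivative 1) (at t)"
  proof -
    have e: "(\<lambda>s::real. Complex s y) = (\<lambda>s. of_real s + \<i> * of_real y)"
      by (auto simp: complex_eq_iff)
    show ?thesis unfolding e by (auto intro!: derivative_eq_intros)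
  qed
  have F: "(F has_vector_derivative D) (at t)"
    using field_vector_diff_chain_at[OF l assms] by (simp add: F_def o_def)
  have "((\<lambda>s. F s * cnj (F s)) has_vector_derivative (F t * cnj D + D * cnj (F t))) (at t)"
    using has_vector_derivative_mult[OF F has_vector_derivative_cnj[OF F]]
    by (simp add: algebra_simps)
  hence "((\<lambda>s. Re (F s * cnj (F s))) has_field_derivative Re (F t * cnj D + D * cnj (F t))) (at t)"
    by (rule has_field_derivative_Re)
  moreover have "\<And>s. Re (F s * cnj (F s)) = (cmod (F s))^2"
    by (simp add: complex_mult_cnj cmod_power2)
  moreover have "Re (F t * cnj D + D * cnj (F t)) = 2 * Re (cnj (F t) * D)"
    by simp
  ultimately show ?thesis unfolding F_def by (simp add: mult.commute)
qed

lemma left_local: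
  fixes R :: "complex \<Rightarrow> complex" and U :: "complex set"
  assumes U: "open U" and holo: "R holomorphic_on U"
    and axis: "\<And>y. Complex 0 y \<in> U" and bnd: "\<And>y. cmod (R (Complex 0 y)) \<le> 1"
    and bdry: "\<And>y. cmod (R (Complex 0 y)) = 1 \<Longrightarrow> Re (cnj (R (Complex 0 y)) * deriv R (Complex 0 y)) > 0"
  shows "\<exists>e>0. \<exists>\<delta>>0. \<forall>y d. \<bar>y - y0\<bar> < e \<longrightarrow> 0 < d \<longrightarrow> d \<le> \<delta> \<longrightarrow>
            Complex (-d) y \<in> U \<and> cmod (R (Complex (-d) y)) < 1"
proof -
  define z0 where "z0 = Complex 0 y0"
  have z0U: "z0 \<in> U" unfolding z0_def by (rule axis)
  obtain r1 where r1: "r1 > 0" "ball z0 r1 \<subseteq> U" using U z0U openE by blast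
  have contR: "continuous_on U R" using holo by (rule holomorphic_on_imp_continuous_on)
  have near: "dist (Complex (-d) y) z0 < r" if "\<bar>y - y0\<bar> < r/2" "0 \<le> d" "d \<le> r/2" for y d r
  proof -
    have "dist (Complex (-d) y) z0 = cmod (Complex (-d) (y - y0))"
      unfolding z0_def dist_norm by (rule arg_cong[where f=cmod]) (simp add: complex_eq_iff)
    also have "\<dots> \<le> \<bar>-d\<bar> + \<bar>y - y0\<bar>" using cmod_le[of "Complex (-d) (y - y0)"] by simp
    finally show ?thesis using that by linarith
  qed
  show ?thesis
  proof (cases "cmod (R z0) = 1")
    case False
    hence lt: "cmod (R z0) < 1" using bnd[of y0] unfolding z0_def by simp
    have "isCont (\<lambda>z. cmod (R z)) z0"
      using contR U z0U by (intro continuous_intros) (simp add: continuous_on_eq_continuous_at)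
    then obtain r2 where r2: "r2 > 0" "\<And>z. dist z z0 < r2 \<Longrightarrow> \<bar>cmod (R z) - cmod (R z0)\<bar> < 1 - cmod (R z0)"
      using lt unfolding continuous_at_eps_delta dist_real_def by (metis diff_gt_0_iff_gt)
    define r where "r = min r1 r2"
    have r: "r > 0" using r1 r2 unfolding r_def by simp
    show ?thesis
    proof (intro exI[of _ "r/2"] conjI allI impI)
      fix y d assume h: "\<bar>y - y0\<bar> < r/2" "0 < d" "d \<le> r/2"
      have dz: "dist (Complex (-d) y) z0 < r" using near[of y r d] h by simp
      thus "Complex (-d) y \<in> U" using r1 unfolding r_def by (auto simp: dist_commute)
      show "cmod (R (Complex (-d) y)) < 1" using r2(2)[of "Complex (-d) y"] dz unfolding r_def by auto
    qed (use r in auto)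
  next
    case True
    define \<Phi> where "\<Phi> = (\<lambda>z. Re (cnj (R z) * deriv R z))"
    have c: "\<Phi> z0 > 0" unfolding \<Phi>_def z0_def using bdry[of y0] True unfolding z0_def by simp
    have hd: "deriv R holomorphic_on U" using holo U by (rule holomorphic_deriv)
    have "continuous_on U \<Phi>" unfolding \<Phi>_def
      using contR holomorphic_on_imp_continuous_on[OF hd] by (intro continuous_intros)
    hence "isCont \<Phi> z0" using U z0U by (simp add: continuous_on_eq_continuous_at)
    then obtain r2 where r2: "r2 > 0" "\<And>z. dist z z0 < r2 \<Longrightarrow> \<bar>\<Phi> z - \<Phi> z0\<bar> < \<Phi> z0"
      using c unfolding continuous_at_eps_delta dist_real_def by metis
    define r where "r = min r1 r2"
    have r: "r > 0" using r1 r2 unfolding r_def by simp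
    show ?thesis
    proof (intro exI[of _ "r/2"] conjI allI impI)
      fix y d assume h: "\<bar>y - y0\<bar> < r/2" "0 < d" "d \<le> r/2"
      have inb: "Complex s y \<in> U \<and> \<Phi> (Complex s y) > 0" if "-d \<le> s" "s \<le> 0" for s
      proof -
        have dz: "dist (Complex (-(-s)) y) z0 < r" using near[of y r "-s"] h that by simp
        hence "Complex s y \<in> U" using r1 unfolding r_def by (auto simp: dist_commute)
        moreover have "\<Phi> (Complex s y) > 0" using r2(2)[of "Complex s y"] dz unfolding r_def by auto
        ultimately show ?thesis by simp
      qed
      show "Complex (-d) y \<in> U" using inb[of "-d"] h by simp
      have "\<exists>\<xi>. -d < \<xi> \<and> \<xi> < 0 \<and> (cmod (R (Complex 0 y)))^2 - (cmod (R (Complex (-d) y)))^2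
              = (0 - (-d)) * (2 * \<Phi> (Complex \<xi> y))"
        unfolding \<Phi>_def
      proof (rule MVT2)
        fix s assume s: "-d \<le> s" "s \<le> 0"
        have "(R has_field_derivative deriv R (Complex s y)) (at (Complex s y))"
          using inb[OF s] holo U by (intro holomorphic_derivI) auto
        thus "((\<lambda>s. (cmod (R (Complex s y)))\<^sup>2) has_real_derivative 2 * Re (cnj (R (Complex s y)) * deriv R (Complex s y))) (at s)"
          by (rule deriv_normsq_line)
      qed (use h in auto)
      then obtain \<xi> where \<xi>: "-d < \<xi>" "\<xi> < 0" "(cmod (R (Complex 0 y)))^2 - (cmod (R (Complex (-d) y)))^2
              = d * (2 * \<Phi> (Complex \<xi> y))" by auto
      have "\<Phi> (Complex \<xi> y) > 0" using inb[of \<xi>] \<xi> by simp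
      hence "0 < d * (2 * \<Phi> (Complex \<xi> y))" using h by simp
      hence "(cmod (R (Complex (-d) y)))^2 < (cmod (R (Complex 0 y)))^2" using \<xi>(3) by linarith
      also have "\<dots> \<le> 1" using bnd[of y] by (simp add: power_le_one)
      finally have "(cmod (R (Complex (-d) y)))^2 < 1" .
      thus "cmod (R (Complex (-d) y)) < 1" by (simp add: power_less_one_iff abs_square_less_1)
    qed (use r in auto)
  qed
qed

lemma left_uniform:
  fixes R :: "complex \<Rightarrow> complex" and U :: "complex set"
  assumes U: "open U" and holo: "R holomorphic_on U"
    and axis: "\<And>y. Complex 0 y \<in> U" and bnd: "\<And>y. cmod (R (Complex 0 y)) \<le> 1"
    and bdry: "\<And>y. cmod (R (Complex 0 y)) = 1 \<Longrightarrow> Re (cnj (R (Complex 0 y)) * deriv R (Complex 0 y)) > 0"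
  shows "\<exists>\<delta>>0. \<forall>d. 0 < d \<and> d \<le> \<delta> \<longrightarrow> (\<forall>y. \<bar>y\<bar> \<le> T \<longrightarrow>
            Complex (-d) y \<in> U \<and> cmod (R (Complex (-d) y)) < 1)"
proof -
  have "\<forall>y0. \<exists>e. e > 0 \<and> (\<exists>\<delta>>0. \<forall>y d. \<bar>y - y0\<bar> < e \<longrightarrow> 0 < d \<longrightarrow> d \<le> \<delta> \<longrightarrow>
            Complex (-d) y \<in> U \<and> cmod (R (Complex (-d) y)) < 1)"
    using left_local[OF assms] by blast
  then obtain e where e: "\<And>y0. e y0 > 0 \<and> (\<exists>\<delta>>0. \<forall>y d. \<bar>y - y0\<bar> < e y0 \<longrightarrow> 0 < d \<longrightarrow> d \<le> \<delta> \<longrightarrow>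
            Complex (-d) y \<in> U \<and> cmod (R (Complex (-d) y)) < 1)"
    by metis
  then obtain \<delta> where \<delta>: "\<And>y0. \<delta> y0 > 0 \<and> (\<forall>y d. \<bar>y - y0\<bar> < e y0 \<longrightarrow> 0 < d \<longrightarrow> d \<le> \<delta> y0 \<longrightarrow>
            Complex (-d) y \<in> U \<and> cmod (R (Complex (-d) y)) < 1)"
    by metis
  have cov: "{-T..T} \<subseteq> (\<Union>y0\<in>{-T..T}. ball y0 (e y0))" using e by force
  obtain C where C: "C \<subseteq> {-T..T}" "finite C" "{-T..T} \<subseteq> (\<Union>y0\<in>C. ball y0 (e y0))"
    by (rule compactE_image[OF compact_Icc _ cov]) simp_all
  define m where "m = Min (insert 1 (\<delta> ` C))"
  have m0: "m > 0" unfolding m_def using C(2) \<delta> by auto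
  show ?thesis
  proof (intro exI[of _ m] conjI allI impI)
    fix d y assume h: "0 < d \<and> d \<le> m" "\<bar>y\<bar> \<le> T"
    have "y \<in> {-T..T}" using h(2) by auto
    then obtain y0 where y0: "y0 \<in> C" "y \<in> ball y0 (e y0)" using C(3) by blast
    have "m \<le> \<delta> y0" unfolding m_def using C(2) y0(1) by simp
    moreover have "\<bar>y - y0\<bar> < e y0" using y0(2) by (simp add: dist_real_def abs_minus_commute)
    ultimately show "Complex (-d) y \<in> U" "cmod (R (Complex (-d) y)) < 1" using \<delta>[of y0] h by auto
  qed (use m0 in auto)
qed



lemma eventually_notin_finite:
  fixes x :: "'a::t1_space"
  assumes "finite F"
  shows "eventually (\<lambda>y. y \<notin> F) (at x)"
proof -
  have "eventually (\<lambda>y. \<forall>a\<in>F. y \<noteq> a) (at x)"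
    using assms by (intro eventually_ball_finite) (auto intro: eventually_neq_at_within)
  thus ?thesis by (rule eventually_mono) auto
qed

lemma ax_eq: "Complex 0 y = \<i> * of_real y"
  by (simp add: complex_eq_iff)

lemma analytic_part:
  fixes p q :: "complex poly" and \<phi> \<psi> :: "real \<Rightarrow> complex" and m :: real
  assumes deg: "degree q < degree p"
    and P1: "\<And>y. cmod (\<phi> y) \<le> 1"
    and P2: "\<And>y. poly p (Complex 0 y) \<noteq> 0 \<Longrightarrow> \<phi> y = poly q (Complex 0 y) / poly p (Complex 0 y)"
    and P3: "\<And>y. isCont \<phi> y"
    and P4: "\<And>y0 t. cmod (\<phi> y0) = 1 \<Longrightarrow> \<phi> (y0 + t) = \<phi> y0 * \<psi> t"
    and P5: "(\<lambda>n. real (Suc n) * Im (\<psi> (inverse (real (Suc n))))) \<longlonglongrightarrow> m"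
    and m: "m > 0"
  shows "zeros_rhp (p - q) = zeros_rhp p"
proof (cases "q = 0")
  case True
  thus ?thesis by simp
next
  case q0: False
  define h where "h = gcd p q"
  define p1 where "p1 = p div h"
  define q1 where "q1 = q div h"
  have h0: "h \<noteq> 0" unfolding h_def using q0 by simp
  have pq: "p = h * p1" "q = h * q1" unfolding h_def p1_def q1_def by simp_all
  have p0: "p \<noteq> 0" using deg by auto
  have p10: "p1 \<noteq> 0" using pq p0 by auto
  have cop: "coprime p1 q1" unfolding p1_def q1_def h_def using q0 by (intro div_gcd_coprime) simp
  have nocommon: "\<not> (poly p1 a = 0 \<and> poly q1 a = 0)" for a
  proof
    assume "poly p1 a = 0 \<and> poly q1 a = 0"
    hence "[:-a, 1:] dvd p1" "[:-a, 1:] dvd q1" by (simp_all add: poly_eq_0_iff_dvd)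
    hence "is_unit [:-a, 1:]" by (rule coprime_common_divisor[OF cop])
    thus False by (simp add: is_unit_iff_degree)
  qed
  define ax :: "real \<Rightarrow> complex" where "ax = (\<lambda>y. Complex 0 y)"
  have ax_cont: "isCont ax y" for y unfolding ax_def ax_eq by (intro continuous_intros)
  have finp: "finite {y. poly p (ax y) = 0}"
  proof -
    have "finite (ax -` {z. poly p z = 0})"
      by (rule finite_vimageI[OF poly_roots_finite[OF p0]]) (auto simp: inj_on_def ax_def)
    thus ?thesis by (simp add: vimage_def)
  qed
  have ev: "eventually (\<lambda>y. poly p (ax y) \<noteq> 0) (at y0)" for y0
    using eventually_notin_finite[OF finp, of y0] by simp
  have E: "\<phi> y = poly q1 (ax y) / poly p1 (ax y)" if "poly p (ax y) \<noteq> 0" for y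
  proof -
    have "poly h (ax y) \<noteq> 0" using that pq by auto
    thus ?thesis using P2[of y] that unfolding ax_def pq by simp
  qed
  have axis: "poly p1 (ax y0) \<noteq> 0" for y0
  proof
    assume z: "poly p1 (ax y0) = 0"
    have l1: "((\<lambda>y. cmod (poly q1 (ax y))) \<longlongrightarrow> cmod (poly q1 (ax y0))) (at y0)"
      using ax_cont[of y0] by (intro tendsto_intros isCont_tendsto_compose[where g="poly q1"]) (auto simp: isCont_def)
    have l2: "((\<lambda>y. cmod (poly p1 (ax y))) \<longlongrightarrow> cmod (poly p1 (ax y0))) (at y0)"
      using ax_cont[of y0] by (intro tendsto_intros isCont_tendsto_compose[where g="poly p1"]) (auto simp: isCont_def)
    have "eventually (\<lambda>y. cmod (poly q1 (ax y)) \<le> cmod (poly p1 (ax y))) (at y0)"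
      using ev[of y0]
    proof eventually_elim
      case (elim y)
      hence "poly p1 (ax y) \<noteq> 0" using pq by auto
      moreover have "cmod (poly q1 (ax y) / poly p1 (ax y)) \<le> 1" using E[OF elim] P1[of y] by simp
      ultimately show ?case by (simp add: norm_divide divide_le_eq)
    qed
    hence "cmod (poly q1 (ax y0)) \<le> cmod (poly p1 (ax y0))"
      by (rule tendsto_le[OF _ l2 l1, rotated]) simp
    hence "poly q1 (ax y0) = 0" using z by simp
    thus False using z nocommon by blast
  qed
  define R where "R = (\<lambda>z. poly q1 z / poly p1 z)"
  define U where "U = {z. poly p1 z \<noteq> 0}"
  have U: "open U" unfolding U_def by (intro open_Collect_neq continuous_intros)
  have holo: "R holomorphic_on U" unfolding R_def U_def by (intro holomorphic_intros) auto
  have Rc: "isCont (\<lambda>y. R (ax y)) y" for y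
  proof -
    have "isCont R (ax y)"
      using holomorphic_on_imp_continuous_on[OF holo] U axis[of y]
      by (simp add: continuous_on_eq_continuous_at U_def)
    thus ?thesis using ax_cont[of y] by (rule isCont_o2[rotated])
  qed
  have RE: "R (ax y) = \<phi> y" for y
  proof -
    have "(\<phi> \<longlongrightarrow> \<phi> y) (at y)" using P3[of y] by (simp add: isCont_def)
    moreover have "(\<phi> \<longlongrightarrow> R (ax y)) (at y)"
    proof (rule Lim_transform_eventually)
      show "((\<lambda>y. R (ax y)) \<longlongrightarrow> R (ax y)) (at y)" using Rc[of y] by (simp add: isCont_def)
      show "eventually (\<lambda>x. R (ax x) = \<phi> x) (at y)"
        using ev[of y] by eventually_elim (simp add: E R_def)
    qed
    ultimately show ?thesis using tendsto_unique[OF trivial_limit_at] by metis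
  qed
  have bdry: "Re (cnj (R (Complex 0 y0)) * deriv R (Complex 0 y0)) > 0"
    if y0: "cmod (R (Complex 0 y0)) = 1" for y0
  proof -
    define w where "w = R (ax y0)"
    define G where "G = deriv R (ax y0)"
    have w1: "cmod w = 1" using y0 unfolding w_def ax_def .
    have ww: "cnj w * w = 1"
      using w1 by (simp add: complex_norm_square[symmetric] mult.commute)
    have pw: "cmod (\<phi> y0) = 1" using w1 RE[of y0] unfolding w_def by simp
    have "(R has_field_derivative G) (at (ax y0))"
      unfolding G_def using holo U axis[of y0] by (intro holomorphic_derivI) (auto simp: U_def)
    hence dq: "((\<lambda>z. (R z - R (ax y0)) / (z - ax y0)) \<longlongrightarrow> G) (at (ax y0))"
      by (simp add: has_field_derivative_iff)
    define t where "t = (\<lambda>n. inverse (real (Suc n)))"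
    have t0: "t \<longlonglongrightarrow> 0" unfolding t_def by (rule LIMSEQ_inverse_real_of_nat)
    have tpos: "t n > 0" for n unfolding t_def by simp
    have zl: "filterlim (\<lambda>n. ax (y0 + t n)) (at (ax y0)) sequentially"
    proof (rule filterlim_atI)
      show "((\<lambda>n. ax (y0 + t n)) \<longlongrightarrow> ax y0) sequentially"
        unfolding ax_def ax_eq using t0 by (auto intro!: tendsto_eq_intros)
      show "eventually (\<lambda>n. ax (y0 + t n) \<noteq> ax y0) sequentially"
        using tpos by (intro always_eventually) (auto simp: ax_def less_le)
    qed
    have "((\<lambda>n. (R (ax (y0 + t n)) - R (ax y0)) / (ax (y0 + t n) - ax y0)) \<longlonglongrightarrow> G)"
      using filterlim_compose[OF dq zl] by (simp add: o_def)
    moreover have "(R (ax (y0 + t n)) - R (ax y0)) / (ax (y0 + t n) - ax y0)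
        = w * ((\<psi> (t n) - 1) / (\<i> * of_real (t n)))" for n
    proof -
      have "R (ax (y0 + t n)) = w * \<psi> (t n)" unfolding RE w_def RE using P4[OF pw] by simp
      moreover have "ax (y0 + t n) - ax y0 = \<i> * of_real (t n)" unfolding ax_def by (simp add: complex_eq_iff)
      ultimately show ?thesis unfolding w_def by (simp add: algebra_simps)
    qed
    ultimately have "(\<lambda>n. w * ((\<psi> (t n) - 1) / (\<i> * of_real (t n)))) \<longlonglongrightarrow> G" by simp
    hence "(\<lambda>n. cnj w * (w * ((\<psi> (t n) - 1) / (\<i> * of_real (t n))))) \<longlonglongrightarrow> cnj w * G"
      by (intro tendsto_intros)
    hence "(\<lambda>n. (\<psi> (t n) - 1) / (\<i> * of_real (t n))) \<longlonglongrightarrow> cnj w * G"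
      by (simp add: mult.assoc[symmetric] ww)
    hence "(\<lambda>n. Re ((\<psi> (t n) - 1) / (\<i> * of_real (t n)))) \<longlonglongrightarrow> Re (cnj w * G)"
      by (intro tendsto_intros)
    moreover have "Re ((\<psi> (t n) - 1) / (\<i> * of_real (t n))) = real (Suc n) * Im (\<psi> (inverse (real (Suc n))))" for n
      unfolding t_def by (simp add: Re_divide field_simps)
    ultimately have "(\<lambda>n. real (Suc n) * Im (\<psi> (inverse (real (Suc n))))) \<longlonglongrightarrow> Re (cnj w * G)" by simp
    hence "Re (cnj w * G) = m" using P5 LIMSEQ_unique by blast
    thus ?thesis using m unfolding w_def G_def ax_def by simp
  qed
  have left: "\<exists>\<delta>>0. \<forall>d. 0 < d \<and> d \<le> \<delta> \<longrightarrow> (\<forall>y. \<bar>y\<bar> \<le> T \<longrightarrow>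
        cmod (poly q1 (Complex (-d) y)) < cmod (poly p1 (Complex (-d) y)))" for T
  proof -
    obtain \<delta> where \<delta>: "\<delta> > 0" "\<forall>d. 0 < d \<and> d \<le> \<delta> \<longrightarrow> (\<forall>y. \<bar>y\<bar> \<le> T \<longrightarrow>
            Complex (-d) y \<in> U \<and> cmod (R (Complex (-d) y)) < 1)"
      using left_uniform[OF U holo, of T] axis bdry RE P1 unfolding U_def ax_def by force
    show ?thesis
    proof (intro exI[of _ \<delta>] conjI allI impI)
      fix d y assume "0 < d \<and> d \<le> \<delta>" "\<bar>y\<bar> \<le> T"
      hence "poly p1 (Complex (-d) y) \<noteq> 0" "cmod (R (Complex (-d) y)) < 1" using \<delta> by (auto simp: U_def)
      thus "cmod (poly q1 (Complex (-d) y)) < cmod (poly p1 (Complex (-d) y))"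
        by (simp add: R_def norm_divide divide_less_eq)
    qed (use \<delta> in auto)
  qed
  show ?thesis by (rule rouche_core[OF pq deg left])
qed



lemma prob_facts:
  fixes M :: "'a measure" and D X :: "'a \<Rightarrow> real" and s :: complex
  assumes P: "prob_space M" and Dm: "D \<in> borel_measurable M" and Xm: "X \<in> borel_measurable M"
    and D0: "AE \<omega> in M. D \<omega> \<ge> 0" and s: "Re s \<ge> 0" and Xi: "integrable M X"
  defines "\<phi> \<equiv> \<lambda>y. \<integral>\<omega>. exp (- s * of_real (D \<omega>) + Complex 0 y * of_real (X \<omega>)) \<partial>M"
    and "\<psi> \<equiv> \<lambda>t. \<integral>\<omega>. exp (Complex 0 t * of_real (X \<omega>)) \<partial>M"
  shows "\<And>y. cmod (\<phi> y) \<le> 1"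
    and "\<And>y. isCont \<phi> y"
    and "\<And>y0 t. cmod (\<phi> y0) = 1 \<Longrightarrow> \<phi> (y0 + t) = \<phi> y0 * \<psi> t"
    and "(\<lambda>n. real (Suc n) * Im (\<psi> (inverse (real (Suc n))))) \<longlonglongrightarrow> (\<integral>\<omega>. X \<omega> \<partial>M)"
proof -
  interpret prob_space M by (rule P)
  define Z where "Z = (\<lambda>y \<omega>. exp (- s * of_real (D \<omega>) + Complex 0 y * of_real (X \<omega>)))"
  have Zm: "Z y \<in> borel_measurable M" for y unfolding Z_def using Dm Xm by measurable
  have Em: "(\<lambda>\<omega>. exp (Complex 0 r * of_real (X \<omega>))) \<in> borel_measurable M" for r using Xm by measurable
  have Zn: "cmod (Z y \<omega>) = exp (- Re s * D \<omega>)" for y \<omega> unfolding Z_def by simp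
  have Zb: "AE \<omega> in M. cmod (Z y \<omega>) \<le> 1" for y
    using D0 by eventually_elim (simp add: Zn mult_nonneg_nonneg s)
  have Zi: "integrable M (Z y)" for y by (rule integrable_const_bound[OF Zb Zm])
  have phiZ: "\<phi> y = integral\<^sup>L M (Z y)" for y unfolding \<phi>_def Z_def ..
  show P1: "cmod (\<phi> y) \<le> 1" for y
  proof -
    have "cmod (\<phi> y) \<le> (\<integral>\<omega>. cmod (Z y \<omega>) \<partial>M)" unfolding phiZ by (rule integral_norm_bound)
    also have "\<dots> \<le> 1" using Zi Zb by (intro integral_le_const) auto
    finally show ?thesis .
  qed
  show "isCont \<phi> y" for y
  proof (rule continuous_at_sequentially[THEN iffD2], intro allI impI)
    fix u :: "nat \<Rightarrow> real" assume u: "u \<longlonglongrightarrow> y"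
    have "(\<lambda>n. integral\<^sup>L M (Z (u n))) \<longlonglongrightarrow> integral\<^sup>L M (Z y)"
    proof (rule integral_dominated_convergence[where w="\<lambda>_. 1"])
      show "AE \<omega> in M. (\<lambda>n. Z (u n) \<omega>) \<longlonglongrightarrow> Z y \<omega>"
        unfolding Z_def using u by (intro AE_I2) (auto simp: complex_of_real_def[symmetric] intro!: tendsto_intros)
    qed (use Zm Zb in auto)
    thus "(\<phi> \<circ> u) \<longlonglongrightarrow> \<phi> y" unfolding phiZ o_def .
  qed
  show "\<phi> (y0 + t) = \<phi> y0 * \<psi> t" if y0: "cmod (\<phi> y0) = 1" for y0 t
  proof -
    define w where "w = \<phi> y0"
    have ww: "cnj w * w = 1" using y0 unfolding w_def by (simp add: complex_norm_square[symmetric] mult.commute)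
    define V where "V = (\<lambda>\<omega>. cnj w * Z y0 \<omega>)"
    have Vi: "integrable M V" unfolding V_def using Zi by simp
    have Vint: "integral\<^sup>L M V = 1" unfolding V_def using ww by (simp add: phiZ[symmetric] w_def)
    have Vb: "AE \<omega> in M. cmod (V \<omega>) \<le> 1" using Zb[of y0]
      by eventually_elim (simp add: V_def norm_mult y0[unfolded w_def[symmetric]] )
    have i1: "integrable M (\<lambda>\<omega>. 1 - Re (V \<omega>))" using Vi by auto
    have "integral\<^sup>L M (\<lambda>\<omega>. 1 - Re (V \<omega>)) = 0"
      using Vi Vint by (simp add: integral_diff prob_space)
    moreover have "AE \<omega> in M. 0 \<le> 1 - Re (V \<omega>)" using Vb
    proof eventually_elim
      case (elim \<omega>)
      thus ?case using complex_Re_le_cmod[of "V \<omega>"] by linarith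
    qed
    ultimately have "AE \<omega> in M. 1 - Re (V \<omega>) = 0" using integral_nonneg_eq_0_iff_AE[OF i1] by simp
    hence AV: "AE \<omega> in M. V \<omega> = 1" using Vb
    proof eventually_elim
      case (elim \<omega>)
      hence "Re (V \<omega>) = 1" by simp
      moreover have "(Re (V \<omega>))^2 + (Im (V \<omega>))^2 \<le> 1"
        using elim(2) by (simp add: cmod_def power_le_one_iff)
      ultimately have "Im (V \<omega>) = 0" by simp
      with \<open>Re (V \<omega>) = 1\<close> show ?case by (simp add: complex_eq_iff)
    qed
    have AZ: "AE \<omega> in M. Z y0 \<omega> = w" using AV
    proof eventually_elim
      case (elim \<omega>)
      hence "w * (cnj w * Z y0 \<omega>) = w" unfolding V_def by simp
      thus ?case using ww by (simp add: mult.assoc[symmetric] mult.commute[of w])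
    qed
    have "\<phi> (y0 + t) = (\<integral>\<omega>. Z y0 \<omega> * exp (Complex 0 t * of_real (X \<omega>)) \<partial>M)"
    proof -
      have "Z (y0 + t) \<omega> = Z y0 \<omega> * exp (Complex 0 t * of_real (X \<omega>))" for \<omega>
      proof -
        have "Complex 0 (y0 + t) * of_real (X \<omega>) = Complex 0 y0 * of_real (X \<omega>) + Complex 0 t * of_real (X \<omega>)"
          by (simp add: complex_eq_iff distrib_right)
        hence "- s * of_real (D \<omega>) + Complex 0 (y0 + t) * of_real (X \<omega>)
          = (- s * of_real (D \<omega>) + Complex 0 y0 * of_real (X \<omega>)) + Complex 0 t * of_real (X \<omega>)" by simp
        thus ?thesis unfolding Z_def by (simp only: exp_add)
      qed
      thus ?thesis unfolding phiZ by presburger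
    qed
    also have "\<dots> = (\<integral>\<omega>. w * exp (Complex 0 t * of_real (X \<omega>)) \<partial>M)"
      using AZ by (intro integral_cong_AE) (auto intro!: borel_measurable_times Zm Em)
    also have "\<dots> = w * \<psi> t" unfolding \<psi>_def by simp
    finally show ?thesis unfolding w_def .
  qed
  show "(\<lambda>n. real (Suc n) * Im (\<psi> (inverse (real (Suc n))))) \<longlonglongrightarrow> (\<integral>\<omega>. X \<omega> \<partial>M)"
  proof -
    define t where "t = (\<lambda>n. inverse (real (Suc n)))"
    have Ei: "integrable M (\<lambda>\<omega>. exp (Complex 0 r * of_real (X \<omega>)))" for r
      by (rule integrable_const_bound[where B=1]) (auto simp: Em)
    have eq: "real (Suc n) * Im (\<psi> (t n)) = (\<integral>\<omega>. real (Suc n) * sin (t n * X \<omega>) \<partial>M)" for n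
    proof -
      have "Im (\<psi> (t n)) = (\<integral>\<omega>. Im (exp (Complex 0 (t n) * of_real (X \<omega>))) \<partial>M)"
        unfolding \<psi>_def by (rule integral_Im[OF Ei, symmetric])
      also have "\<dots> = (\<integral>\<omega>. sin (t n * X \<omega>) \<partial>M)"
        by (intro arg_cong[where f="integral\<^sup>L M"] ext) (simp add: Im_exp)
      finally show ?thesis by simp
    qed
    have "(\<lambda>n. \<integral>\<omega>. real (Suc n) * sin (t n * X \<omega>) \<partial>M) \<longlonglongrightarrow> (\<integral>\<omega>. X \<omega> \<partial>M)"
    proof (rule integral_dominated_convergence[where w="\<lambda>\<omega>. \<bar>X \<omega>\<bar>"])
      show "AE \<omega> in M. (\<lambda>n. real (Suc n) * sin (t n * X \<omega>)) \<longlonglongrightarrow> X \<omega>"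
      proof (intro AE_I2)
        fix \<omega> let ?x = "X \<omega>"
        have "((\<lambda>r. sin (?x * r)) has_real_derivative ?x) (at 0)"
          by (auto intro!: derivative_eq_intros)
        hence dq: "((\<lambda>r. (sin (?x * (0 + r)) - sin (?x * 0)) / r) \<longlongrightarrow> ?x) (at 0)"
          by (simp add: DERIV_def)
        have tl: "filterlim t (at 0) sequentially"
          unfolding t_def by (rule filterlim_atI[OF LIMSEQ_inverse_real_of_nat]) simp
        have "((\<lambda>n. (sin (?x * (0 + t n)) - sin (?x * 0)) / t n) \<longlongrightarrow> ?x) sequentially"
          using filterlim_compose[OF dq tl] by (simp add: o_def)
        thus "(\<lambda>n. real (Suc n) * sin (t n * ?x)) \<longlonglongrightarrow> ?x"
          unfolding t_def by (simp add: mult.commute divide_inverse)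
      qed
      show "AE \<omega> in M. norm (real (Suc n) * sin (t n * X \<omega>)) \<le> \<bar>X \<omega>\<bar>" for n
      proof (intro AE_I2)
        fix \<omega>
        have "\<bar>sin (t n * X \<omega>)\<bar> \<le> \<bar>t n * X \<omega>\<bar>" by (rule abs_sin_x_le_abs_x)
        hence a1: "real (Suc n) * \<bar>sin (t n * X \<omega>)\<bar> \<le> real (Suc n) * \<bar>t n * X \<omega>\<bar>"
          by (intro mult_left_mono) auto
        have a2: "real (Suc n) * \<bar>t n * X \<omega>\<bar> = \<bar>X \<omega>\<bar>"
          unfolding t_def by (simp add: abs_mult)
        have a3: "norm (real (Suc n) * sin (t n * X \<omega>)) = real (Suc n) * \<bar>sin (t n * X \<omega>)\<bar>"
          by (simp add: abs_mult)
        show "norm (real (Suc n) * sin (t n * X \<omega>)) \<le> \<bar>X \<omega>\<bar>"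
          unfolding a3 using a1 a2 by linarith
      qed
    qed (use Xm Xi in auto)
    hence "(\<lambda>n. real (Suc n) * Im (\<psi> (t n))) \<longlonglongrightarrow> (\<integral>\<omega>. X \<omega> \<partial>M)" unfolding eq .
    thus ?thesis unfolding t_def .
  qed
qed

theorem propositionA1:
  fixes M :: "'a measure" and A B1 B2 :: "'a \<Rightarrow> real" and c1 c2 :: real
    and P Q :: "complex poly poly poly" and f g :: "complex poly poly" and s1 :: complex
  assumes "prob_space M"
    and "A \<in> borel_measurable M" "B1 \<in> borel_measurable M" "B2 \<in> borel_measurable M"
    and "AE \<omega> in M. A \<omega> > 0" "AE \<omega> in M. B1 \<omega> \<ge> 0" "AE \<omega> in M. B2 \<omega> \<ge> 0"
    and "c1 > 0" "c2 > 0"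
    and "AE \<omega> in M. B1 \<omega> / c1 \<ge> B2 \<omega> / c2"
    \<comment> \<open>rationality of H(q0,q1,q2) = E exp(-q0 A - q1 B1 - q2 B2)\<close>
    and "P \<noteq> 0"
    and "\<And>q0 q1 q2. Re q0 \<ge> 0 \<Longrightarrow> Re q1 \<ge> 0 \<Longrightarrow> Re q2 \<ge> 0 \<Longrightarrow> eval3 P q0 q1 q2 \<noteq> 0 \<Longrightarrow>
        (\<integral>\<omega>. exp (- (q0 * of_real (A \<omega>) + q1 * of_real (B1 \<omega>) + q2 * of_real (B2 \<omega>))) \<partial>M)
          = eval3 Q q0 q1 q2 / eval3 P q0 q1 q2"
    \<comment> \<open>the induced representation E exp(-s1 D + z X2) = f(s1,z)/g(s1,z)\<close>
    and "\<And>s z. Re s \<ge> 0 \<Longrightarrow> Re z = 0 \<Longrightarrow> eval2 g s z \<noteq> 0 \<Longrightarrow>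
        (\<integral>\<omega>. exp (- s * of_real (B1 \<omega> / c1 - B2 \<omega> / c2) + z * of_real (A \<omega> - B2 \<omega> / c2)) \<partial>M)
          = eval2 f s z / eval2 g s z"
    and "\<And>s. degree (sect2 f s) < degree (sect2 g s)"
    \<comment> \<open>drift condition\<close>
    and "integrable M A" "integrable M B2"
    and "c2 * (\<integral>\<omega>. A \<omega> \<partial>M) - (\<integral>\<omega>. B2 \<omega> \<partial>M) > 0"
    and "Re s1 \<ge> 0"
  shows "zeros_rhp (sect2 g s1 - sect2 f s1) = zeros_rhp (sect2 g s1)"
  proof -
  interpret prob_space M by (rule assms(1))
  define D where "D = (\<lambda>\<omega>. B1 \<omega> / c1 - B2 \<omega> / c2)"
  define X where "X = (\<lambda>\<omega>. A \<omega> - B2 \<omega> / c2)"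
  have Dm: "D \<in> borel_measurable M" unfolding D_def using assms(3,4) by measurable
  have Xm: "X \<in> borel_measurable M" unfolding X_def using assms(2,4) by measurable
  have D0: "AE \<omega> in M. D \<omega> \<ge> 0" using assms(10) by eventually_elim (simp add: D_def)
  have Xi: "integrable M X" unfolding X_def using assms(15,16) by auto
  have EX: "(\<integral>\<omega>. X \<omega> \<partial>M) > 0"
  proof -
    have "(\<integral>\<omega>. X \<omega> \<partial>M) = (\<integral>\<omega>. A \<omega> \<partial>M) - (\<integral>\<omega>. B2 \<omega> \<partial>M) / c2"
      unfolding X_def using assms(15,16) by simp
    also have "\<dots> = (c2 * (\<integral>\<omega>. A \<omega> \<partial>M) - (\<integral>\<omega>. B2 \<omega> \<partial>M)) / c2"
      using assms(9) by (simp add: field_simps)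
    also have "\<dots> > 0" using assms(9,17) by simp
    finally show ?thesis .
  qed
  note PF = prob_facts[OF assms(1) Dm Xm D0 assms(18) Xi]
  show ?thesis
  proof (rule analytic_part[OF assms(14) PF(1) _ PF(2) PF(3) PF(4) EX])
    fix y assume "poly (sect2 g s1) (Complex 0 y) \<noteq> 0"
    thus "(\<integral>\<omega>. exp (- s1 * of_real (D \<omega>) + Complex 0 y * of_real (X \<omega>)) \<partial>M)
          = poly (sect2 f s1) (Complex 0 y) / poly (sect2 g s1) (Complex 0 y)"
      using assms(13)[of s1 "Complex 0 y"] assms(18) unfolding D_def X_def eval2_def by simp
  qed
qed

end
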